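(* Let $\Pi$ be an $\mathit{LP}^{\mathit{MLN}}$ program such that every formula in $\mathrm{soft}(\Pi)$ is a soft integrity constraint, i.e. has the form $w : \neg F$ for a real number $w$ and a propositional formula $F$. Then $\mathrm{SSM}'(\Pi) = \mathrm{SM}(\overline{\mathrm{hard}(\Pi)})$.
   Context: Fix a finite set of propositional atoms; an interpretation is a set $X$ of atoms. For a set $\Gamma$ of propositional formulas, the reduct $\Gamma^X$ is obtained by replacing every maximal subformula of each formula of $\Gamma$ not satisfied by $X$ by $\bot$; $X$ is a stable model of $\Gamma$ if $X$ is a minimal (w.r.t. set inclusion) model of $\Gamma^X$ (general stable model semantics of Ferraris). $\mathrm{SM}(\Gamma)$ denotes the set of stable models of $\Gamma$. An $\mathit{LP}^{\mathit{MLN}}$ program $\Pi$ is a finite set of weighted formulas $w : F$, where $F$ is a propositional formula and $w$ is either a real number (the formula is then called soft) or the symbol $\alpha$ denoting infinite weight (the formula is then called hard). $\mathrm{soft}(\Pi)$ and $\mathrm{hard}(\Pi)$ denote the sets of soft and hard weighted formulas of $\Pi$. For a set $\Sigma$ of weighted formulas, $\overline{\Sigma}$ denotes the set of formulas obtained by dropping the weights, and $\Sigma_X$ denotes the set of those $w : F \in \Sigma$ with $X \models F$. $\mathrm{SSM}'(\Pi)$ is the set of interpretations $X$ such that $X$ is a stable model of $\overline{\Pi_X}$ and $X$ satisfies $\overline{\mathrm{hard}(\Pi)}$. *)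

theory Defs
  imports Complex_Main
begin

text \<open>Propositional formulas over atoms of type 'a (Ferraris' syntax: bottom and the
binary connectives; negation is F implies bottom).\<close>

datatype 'a formula =
    Bot
  | Atom 'a
  | And "'a formula" "'a formula"
  | Or "'a formula" "'a formula"
  | Imp "'a formula" "'a formula"

definition Neg :: "'a formula \<Rightarrow> 'a formula" where
  "Neg F = Imp F Bot"

fun sat :: "'a set \<Rightarrow> 'a formula \<Rightarrow> bool" where
  "sat X Bot = False"
| "sat X (Atom p) = (p \<in> X)"
| "sat X (And F G) = (sat X F \<and> sat X G)"
| "sat X (Or F G) = (sat X F \<or> sat X G)"
| "sat X (Imp F G) = (sat X F \<longrightarrow> sat X G)"

definition models :: "'a set \<Rightarrow> 'a formula set \<Rightarrow> bool" where
  "models X \<Gamma> = (\<forall>F\<in>\<Gamma>. sat X F)"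

text \<open>Reduct F^X: every maximal subformula not satisfied by X is replaced by bottom.\<close>
fun reduct :: "'a set \<Rightarrow> 'a formula \<Rightarrow> 'a formula" where
  "reduct X Bot = Bot"
| "reduct X (Atom p) = (if p \<in> X then Atom p else Bot)"
| "reduct X (And F G) = (if sat X (And F G) then And (reduct X F) (reduct X G) else Bot)"
| "reduct X (Or F G) = (if sat X (Or F G) then Or (reduct X F) (reduct X G) else Bot)"
| "reduct X (Imp F G) = (if sat X (Imp F G) then Imp (reduct X F) (reduct X G) else Bot)"

definition reduct_set :: "'a set \<Rightarrow> 'a formula set \<Rightarrow> 'a formula set" where
  "reduct_set X \<Gamma> = reduct X ` \<Gamma>"

definition stable_model :: "'a set \<Rightarrow> 'a formula set \<Rightarrow> bool" where
  "stable_model X \<Gamma> = (models X (reduct_set X \<Gamma>) \<and>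
     (\<forall>Y. Y \<subset> X \<longrightarrow> \<not> models Y (reduct_set X \<Gamma>)))"

definition SM :: "'a formula set \<Rightarrow> 'a set set" where
  "SM \<Gamma> = {X. stable_model X \<Gamma>}"

datatype weight = Soft real | Alpha

type_synonym 'a lpmln = "(weight \<times> 'a formula) set"

definition soft :: "'a lpmln \<Rightarrow> 'a lpmln" where
  "soft \<Pi> = {(w, F) \<in> \<Pi>. w \<noteq> Alpha}"

definition hard :: "'a lpmln \<Rightarrow> 'a lpmln" where
  "hard \<Pi> = {(w, F) \<in> \<Pi>. w = Alpha}"

definition unweight :: "'a lpmln \<Rightarrow> 'a formula set" where
  "unweight \<Sigma> = snd ` \<Sigma>"

definition sat_part :: "'a lpmln \<Rightarrow> 'a set \<Rightarrow> 'a lpmln" where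
  "sat_part \<Sigma> X = {(w, F) \<in> \<Sigma>. sat X F}"

definition SSM' :: "'a lpmln \<Rightarrow> 'a set set" where
  "SSM' \<Pi> = {X. stable_model X (unweight (sat_part \<Pi> X)) \<and> models X (unweight (hard \<Pi>))}"

end

theory Submission
  imports Defs
begin

lemma sat_reduct: "sat X (reduct X F) = sat X F"
  by (induction F) auto

lemma reduct_unsat: "\<not> sat X F \<Longrightarrow> reduct X F = Bot"
  by (cases F) auto

lemma key:
  assumes soft: "\<forall>(w, F) \<in> soft \<Pi>. \<exists>G. F = Neg G"
    and hX: "models X (unweight (hard \<Pi>))"
  shows "models Y (reduct_set X (unweight (sat_part \<Pi> X))) =
         models Y (reduct_set X (unweight (hard \<Pi>)))"
proof
  assume a: "models Y (reduct_set X (unweight (sat_part \<Pi> X)))"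
  show "models Y (reduct_set X (unweight (hard \<Pi>)))"
    unfolding models_def reduct_set_def unweight_def
  proof
    fix H assume "H \<in> reduct X ` snd ` hard \<Pi>"
    then obtain F where F: "(Alpha, F) \<in> \<Pi>" "H = reduct X F"
      unfolding hard_def by force
    have "sat X F" using hX F(1) unfolding models_def unweight_def hard_def by force
    hence "H \<in> reduct X ` snd ` sat_part \<Pi> X" using F unfolding sat_part_def by force
    thus "sat Y H" using a unfolding models_def reduct_set_def unweight_def by blast
  qed
next
  assume a: "models Y (reduct_set X (unweight (hard \<Pi>)))"
  show "models Y (reduct_set X (unweight (sat_part \<Pi> X)))"
    unfolding models_def reduct_set_def unweight_def
  proof
    fix H assume "H \<in> reduct X ` snd ` sat_part \<Pi> X"
    then obtain w F where F: "(w, F) \<in> \<Pi>" "sat X F" "H = reduct X F"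
      unfolding sat_part_def by force
    show "sat Y H"
    proof (cases "w = Alpha")
      case True
      hence "H \<in> reduct X ` snd ` hard \<Pi>" using F unfolding hard_def by force
      thus ?thesis using a unfolding models_def reduct_set_def unweight_def by blast
    next
      case False
      hence "(w, F) \<in> soft \<Pi>" using F unfolding soft_def by auto
      then obtain G where G: "F = Neg G" using soft by blast
      hence "\<not> sat X G" using F(2) by (simp add: Neg_def)
      hence "H = Imp Bot Bot" using F(2,3) G by (simp add: Neg_def reduct_unsat)
      thus ?thesis by simp
    qed
  qed
qed

lemma models_reduct: "models X (reduct_set X \<Gamma>) = models X \<Gamma>"
  unfolding models_def reduct_set_def by (simp add: sat_reduct)

theorem proposition1:
  fixes \<Pi> :: "('a::finite) lpmln"
  assumes "finite \<Pi>"
    and "\<forall>(w, F) \<in> soft \<Pi>. \<exists>G. F = Neg G"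
  shows "SSM' \<Pi> = SM (unweight (hard \<Pi>))"
proof (rule set_eqI, rule iffI)
  fix X assume "X \<in> SSM' \<Pi>"
  hence s: "stable_model X (unweight (sat_part \<Pi> X))" and h: "models X (unweight (hard \<Pi>))"
    unfolding SSM'_def by auto
  show "X \<in> SM (unweight (hard \<Pi>))"
    using s key[OF assms(2) h] unfolding SM_def stable_model_def by simp
next
  fix X assume "X \<in> SM (unweight (hard \<Pi>))"
  hence s: "stable_model X (unweight (hard \<Pi>))" unfolding SM_def by simp
  hence h: "models X (unweight (hard \<Pi>))"
    unfolding stable_model_def using models_reduct by blast
  show "X \<in> SSM' \<Pi>"
    using s h key[OF assms(2) h] unfolding SSM'_def stable_model_def by simp
qed

end
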